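(* Let $x_1,\dots,x_n$ be independent random variables with absolutely continuous CDFs $F_1,\dots,F_n$, and let $\widehat F$ be their empirical CDF, $\widehat F(x)=\frac1n\sum_{i=1}^n\mathbf{1}\{x_i\le x\}$. Let $\phi=\max_{i\in\{1,\dots,n\}}\|F_i-F_n\|_\infty$. For any $\gamma,\delta\in(0,1)$, $$\mathbb{P}\Big(F_n\big(\mathsf{Q}^+_\gamma(\widehat F)\big)-\gamma\le\phi+\min_{\varepsilon\in(0,1)}\Big\{\frac{R(n,\varepsilon,\gamma,\delta)}{1-\varepsilon}\Big\}\Big)\ge1-\delta,$$ and the same bound holds for $\gamma-F_n\big(\mathsf{Q}^-_\gamma(\widehat F)\big)$ in place of $F_n\big(\mathsf{Q}^+_\gamma(\widehat F)\big)-\gamma$.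
   Context: For a CDF $F$ and $\gamma\in(0,1)$: $\mathsf{Q}^-_\gamma(F)=\inf\{x:F(x)\ge\gamma\}$ and $\mathsf{Q}^+_\gamma(F)=\inf\{x:F(x)>\gamma\}$. For $n\in\mathbb{Z}_+$, $\varepsilon>0$, $\gamma,\delta\in(0,1)$, define $R(n,\varepsilon,\gamma,\delta)=\sqrt{\frac{2\gamma(1-\gamma)\log(1/\delta)}{n}}+\Big(\frac23+\frac1{2\varepsilon}\Big)\frac{\log(1/\delta)}{n}$. *)

theory Defs
  imports "HOL-Probability.Probability"
begin

definition Qminus :: "real \<Rightarrow> (real \<Rightarrow> real) \<Rightarrow> real" where
  "Qminus \<gamma> F = Inf {x. F x \<ge> \<gamma>}"

definition Qplus :: "real \<Rightarrow> (real \<Rightarrow> real) \<Rightarrow> real" where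
  "Qplus \<gamma> F = Inf {x. F x > \<gamma>}"

definition R :: "nat \<Rightarrow> real \<Rightarrow> real \<Rightarrow> real \<Rightarrow> real" where
  "R n \<epsilon> \<gamma> \<delta> =
     sqrt (2 * \<gamma> * (1 - \<gamma>) * ln (1 / \<delta>) / real n)
     + (2/3 + 1 / (2 * \<epsilon>)) * ln (1 / \<delta>) / real n"

definition ecdf :: "nat \<Rightarrow> (nat \<Rightarrow> real) \<Rightarrow> real \<Rightarrow> real" where
  "ecdf n x t = real (card {i \<in> {1..n}. x i \<le> t}) / real n"

end

theory Submission
  imports Defs
begin

lemma fact_ge_3pow: "2 * 3 ^ n \<le> (fact (n + 2) :: nat)"
proof (induction n)
  case 0 then show ?case by simp
next
  case (Suc n)
  have "fact (Suc n + 2) = (n + 3) * (fact (n + 2) :: nat)"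
    by (simp add: algebra_simps)
  also have "\<dots> \<ge> 3 * fact (n + 2)" by (intro mult_right_mono) auto
  finally have "3 * fact (n + 2) \<le> (fact (Suc n + 2) :: nat)" .
  moreover have "(2::nat) * 3 ^ Suc n = 3 * (2 * 3 ^ n)" by (simp only: power_Suc mult_ac)
  ultimately show ?case using Suc by linarith
qed

lemma exp_quad_bound:
  fixes l z :: real
  assumes l: "0 \<le> l" and z: "\<bar>z\<bar> \<le> 1"
  shows "exp (l * z) \<le> 1 + l * z + z\<^sup>2 * (exp l - 1 - l)"
proof -
  have s1: "summable (\<lambda>n. inverse (fact (n + 2)) * (x ^ (n + 2)))" for x :: real
    using summable_ignore_initial_segment[OF summable_exp_generic[of x], of 2] by simp
  have "exp (l * z) - 1 - l * z = (\<Sum>n. inverse (fact (n + 2)) * ((l*z) ^ (n + 2)))"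
    using exp_first_two_terms[of "l*z"] by simp
  also have "\<dots> \<le> (\<Sum>n. z\<^sup>2 * (inverse (fact (n + 2)) * (l ^ (n + 2))))"
  proof (rule suminf_le)
    fix n
    have "z ^ n \<le> 1"
    proof -
      have "\<bar>z\<bar> ^ n \<le> 1" using z by (intro power_le_one) auto
      then show ?thesis by (metis abs_ge_self order.trans power_abs)
    qed
    then have "l ^ (n+2) * z ^ n \<le> l ^ (n+2) * 1"
      by (rule mult_left_mono) (use l in simp)
    then have "z\<^sup>2 * (l ^ (n+2) * z ^ n) \<le> z\<^sup>2 * (l ^ (n+2) * 1)"
      by (rule mult_left_mono) simp
    moreover have "(l*z) ^ (n + 2) = z\<^sup>2 * (l ^ (n+2) * z ^ n)"
      by (simp add: power_mult_distrib power_add power2_eq_square ac_simps)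
    ultimately have "(l*z) ^ (n + 2) \<le> z\<^sup>2 * l ^ (n+2)" by (metis mult_1_right)
    then have "inverse (fact (n + 2)) * ((l*z) ^ (n + 2)) \<le> inverse (fact (n + 2)) * (z\<^sup>2 * l ^ (n+2))"
      by (rule mult_left_mono) simp
    then show "inverse (fact (n + 2)) * ((l*z) ^ (n + 2)) \<le> z\<^sup>2 * (inverse (fact (n + 2)) * (l ^ (n + 2)))"
      by (metis mult.left_commute)
  next
    show "summable (\<lambda>n. inverse (fact (n + 2)) * ((l*z) ^ (n + 2)))" by (rule s1)
    show "summable (\<lambda>n. z\<^sup>2 * (inverse (fact (n + 2)) * (l ^ (n + 2))))"
      by (intro summable_mult s1)
  qed
  also have "\<dots> = z\<^sup>2 * (\<Sum>n. inverse (fact (n + 2)) * (l ^ (n + 2)))"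
    by (intro suminf_mult s1)
  also have "(\<Sum>n. inverse (fact (n + 2)) * (l ^ (n + 2))) = exp l - 1 - l"
    using exp_first_two_terms[of l] by simp
  finally show ?thesis by simp
qed

lemma exp_bernstein_bound:
  fixes l :: real
  assumes l: "0 \<le> l" "l < 3"
  shows "exp l - 1 - l \<le> l\<^sup>2 / (2 * (1 - l / 3))"
proof -
  have s1: "summable (\<lambda>n. inverse (fact (n + 2)) * (x ^ (n + 2)))" for x :: real
    using summable_ignore_initial_segment[OF summable_exp_generic[of x], of 2] by simp
  have g: "summable (\<lambda>n. (l/3) ^ n)" using l by (intro summable_geometric) auto
  have "exp l - 1 - l = (\<Sum>n. inverse (fact (n + 2)) * (l ^ (n + 2)))"
    using exp_first_two_terms[of l] by simp
  also have "\<dots> \<le> (\<Sum>n. l\<^sup>2 / 2 * ((l/3) ^ n))"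
  proof (rule suminf_le)
    fix n
    have f: "(2 * 3 ^ n :: real) \<le> fact (n+2)"
    proof -
      have "real (2 * 3 ^ n) \<le> real (fact (n+2))" using fact_ge_3pow[of n] by (simp only: of_nat_le_iff)
      then show ?thesis by (simp only: of_nat_fact of_nat_mult of_nat_power of_nat_numeral)
    qed
    have "l ^ (n + 2) / fact (n+2) \<le> l ^ (n+2) / (2 * 3 ^ n)"
      using f l by (intro divide_left_mono) auto
    also have "\<dots> = l\<^sup>2 / 2 * ((l/3) ^ n)"
      by (simp add: power_add power_divide power2_eq_square)
    finally show "inverse (fact (n + 2)) * (l ^ (n + 2)) \<le> l\<^sup>2 / 2 * ((l/3) ^ n)"
      by (metis divide_inverse mult.commute)
  qed (use s1 g summable_mult in auto)
  also have "\<dots> = l\<^sup>2 / 2 * (\<Sum>n. (l/3) ^ n)" by (intro suminf_mult g)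
  also have "(\<Sum>n. (l/3) ^ n) = 1 / (1 - l/3)" using l by (intro suminf_geometric) auto
  finally show ?thesis by simp
qed

lemma mgf_bound:
  fixes p l \<sigma> :: real
  assumes p: "0 \<le> p" "p \<le> 1" and \<sigma>: "\<sigma> = 1 \<or> \<sigma> = -1" and l: "0 \<le> l" "l < 3"
  shows "(1 - p) * exp (l * (\<sigma> * (0 - p))) + p * exp (l * (\<sigma> * (1 - p)))
           \<le> exp (l\<^sup>2 / (2 * (1 - l / 3)) * (p * (1 - p)))"
proof -
  define G where "G = exp l - 1 - l"
  have G0: "0 \<le> G" using exp_ge_add_one_self[of l] unfolding G_def by linarith
  have a: "exp (l * (\<sigma> * (0 - p))) \<le> 1 + l * (\<sigma> * (0 - p)) + (\<sigma> * (0 - p))\<^sup>2 * G"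
    unfolding G_def by (rule exp_quad_bound) (use l p \<sigma> in auto)
  have b: "exp (l * (\<sigma> * (1 - p))) \<le> 1 + l * (\<sigma> * (1 - p)) + (\<sigma> * (1 - p))\<^sup>2 * G"
    unfolding G_def by (rule exp_quad_bound) (use l p \<sigma> in auto)
  have "(1 - p) * exp (l * (\<sigma> * (0 - p))) + p * exp (l * (\<sigma> * (1 - p)))
      \<le> (1 - p) * (1 + l * (\<sigma> * (0 - p)) + (\<sigma> * (0 - p))\<^sup>2 * G) + p * (1 + l * (\<sigma> * (1 - p)) + (\<sigma> * (1 - p))\<^sup>2 * G)"
    using a b p by (intro add_mono mult_left_mono) auto
  also have "\<dots> = 1 + G * (p * (1 - p))"
    using \<sigma> by (auto simp: power2_eq_square algebra_simps)
  also have "\<dots> \<le> exp (G * (p * (1 - p)))" by (rule exp_ge_add_one_self)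
  also have "\<dots> \<le> exp (l\<^sup>2 / (2 * (1 - l / 3)) * (p * (1 - p)))"
    using exp_bernstein_bound[OF l] p unfolding G_def by (intro iffD2[OF exp_le_cancel_iff] mult_right_mono) auto
  finally show ?thesis .
qed

definition Cc :: "real \<Rightarrow> real \<Rightarrow> real \<Rightarrow> real \<Rightarrow> bool" where
  "Cc N L \<gamma> s \<longleftrightarrow> N * s\<^sup>2 \<ge> 2 * L * (\<gamma> * (1 - \<gamma>) + s) + 2/3 * L * s"

lemma claimA:
  fixes \<epsilon> s \<gamma> \<delta> :: real and n :: nat
  assumes n: "n \<ge> 1" and \<epsilon>: "0 < \<epsilon>" "\<epsilon> < 1" and s: "0 \<le> s"
    and \<gamma>: "0 < \<gamma>" "\<gamma> < 1" and \<delta>: "0 < \<delta>" "\<delta> < 1"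
    and h: "R n \<epsilon> \<gamma> \<delta> \<le> s * (1 - \<epsilon>)"
  shows "Cc (real n) (ln (1/\<delta>)) \<gamma> s"
proof -
  define N where "N = real n"
  define L where "L = ln (1/\<delta>)"
  have N: "N > 0" using n by (simp add: N_def)
  have L: "L > 0" using \<delta> by (simp add: L_def)
  define a where "a = sqrt (2 * \<gamma> * (1 - \<gamma>) * L / N)"
  define b where "b = sqrt (2 * s * L / N)"
  define u where "u = sqrt (2 * (\<gamma> * (1 - \<gamma>) + s) * L / N)"
  have g0: "0 \<le> \<gamma> * (1 - \<gamma>)" using \<gamma> by auto
  have u0: "0 \<le> u" unfolding u_def using g0 s L N by auto
  have "u = sqrt (2 * \<gamma> * (1 - \<gamma>) * L / N + 2 * s * L / N)"
    unfolding u_def using N by (intro arg_cong[where f=sqrt]) (simp add: field_simps)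
  also have "\<dots> \<le> a + b" unfolding a_def b_def
    by (rule sqrt_add_le_add_sqrt) (use g0 s L N in auto)
  finally have uab: "u \<le> a + b" .
  have "b \<le> \<epsilon> * s + L / (2 * \<epsilon> * N)"
    unfolding b_def
  proof (rule real_le_lsqrt)
    show "0 \<le> \<epsilon> * s + L / (2 * \<epsilon> * N)" using \<epsilon> s L N by auto
    have "0 \<le> (\<epsilon> * s - L / (2 * \<epsilon> * N))\<^sup>2" by simp
    moreover have "(\<epsilon> * s + L / (2 * \<epsilon> * N))\<^sup>2 = (\<epsilon> * s - L / (2 * \<epsilon> * N))\<^sup>2 + 2 * s * L / N"
      using \<epsilon> N by (simp add: power2_eq_square field_simps)
    ultimately show "2 * s * L / N \<le> (\<epsilon> * s + L / (2 * \<epsilon> * N))\<^sup>2" by linarith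
  qed
  moreover have "R n \<epsilon> \<gamma> \<delta> = a + 2/3 * L / N + L / (2 * \<epsilon> * N)"
    unfolding R_def a_def L_def N_def using \<epsilon> n by (simp add: field_simps)
  ultimately have su: "s - 2/3 * L / N \<ge> u" using h uab by (simp add: algebra_simps)
  have LN: "0 \<le> 2/3 * L / N" using L N by auto
  have "u * u \<le> s * (s - 2/3 * L / N)"
    using su u0 LN by (intro mult_mono) auto
  moreover have "u * u = 2 * (\<gamma> * (1 - \<gamma>) + s) * L / N"
    unfolding u_def using g0 s L N by simp
  ultimately have "2 * (\<gamma> * (1 - \<gamma>) + s) * L / N \<le> s * (s - 2/3 * L / N)" by simp
  then have "N * (2 * (\<gamma> * (1 - \<gamma>) + s) * L / N) \<le> N * (s * (s - 2/3 * L / N))"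
    using N by (intro mult_left_mono) auto
  moreover have "N * (2 * (\<gamma> * (1 - \<gamma>) + s) * L / N) = 2 * L * (\<gamma> * (1 - \<gamma>) + s)"
    using N by simp
  moreover have "N * (s * (s - 2/3 * L / N)) = N * s\<^sup>2 - 2/3 * L * s"
    using N by (simp add: field_simps power2_eq_square)
  ultimately show ?thesis unfolding Cc_def N_def[symmetric] L_def[symmetric] by linarith
qed

lemma C_of_m:
  fixes s \<gamma> \<delta> :: real and n :: nat
  assumes n: "n \<ge> 1" and \<gamma>: "0 < \<gamma>" "\<gamma> < 1" and \<delta>: "0 < \<delta>" "\<delta> < 1"
    and s: "(INF \<epsilon>\<in>{0<..<1}. R n \<epsilon> \<gamma> \<delta> / (1 - \<epsilon>)) \<le> s"
  shows "Cc (real n) (ln (1/\<delta>)) \<gamma> s \<and> s > 0"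
proof -
  define m where "m = (INF \<epsilon>\<in>{0<..<1}. R n \<epsilon> \<gamma> \<delta> / (1 - \<epsilon>))"
  define N where "N = real n"
  define L where "L = ln (1/\<delta>)"
  have N: "N > 0" using n by (simp add: N_def)
  have L: "L > 0" using \<delta> by (simp add: L_def)
  have R0: "0 \<le> R n \<epsilon> \<gamma> \<delta> / (1 - \<epsilon>)" if "\<epsilon> \<in> {0<..<1}" for \<epsilon>
    using that \<gamma> \<delta> n unfolding R_def by (intro divide_nonneg_nonneg add_nonneg_nonneg) auto
  have bdd: "bdd_below ((\<lambda>\<epsilon>. R n \<epsilon> \<gamma> \<delta> / (1 - \<epsilon>)) ` {0<..<1})"
    using R0 by (intro bdd_belowI2) auto
  have m0: "0 \<le> m" unfolding m_def using R0 by (intro cINF_greatest) auto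
  have gt: "Cc N L \<gamma> s'" if "s' > m" for s'
  proof -
    from that obtain \<epsilon> where e: "\<epsilon> \<in> {0<..<1}" "R n \<epsilon> \<gamma> \<delta> / (1 - \<epsilon>) < s'"
      using cINF_less_iff[OF _ bdd] unfolding m_def by auto
    then have "R n \<epsilon> \<gamma> \<delta> \<le> s' * (1 - \<epsilon>)" by (simp add: field_simps)
    then show ?thesis unfolding N_def L_def
      using claimA[of n \<epsilon> s' \<gamma> \<delta>] e that m0 n \<gamma> \<delta> by auto
  qed
  define h where "h = (\<lambda>s. N * s\<^sup>2 - (2 * L * (\<gamma> * (1 - \<gamma>) + s) + 2/3 * L * s))"
  have hC: "Cc N L \<gamma> s \<longleftrightarrow> 0 \<le> h s" for s unfolding Cc_def h_def by simp
  have "0 \<le> h m"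
  proof (rule tendsto_lowerbound)
    show "(h \<longlongrightarrow> h m) (at_right m)" unfolding h_def by (intro tendsto_intros)
    show "\<forall>\<^sub>F i in at_right m. 0 \<le> h i"
      unfolding eventually_at_filter using gt hC by (intro always_eventually) auto
    show "\<not> trivial_limit (at_right m)" by simp
  qed
  then have Cm: "Cc N L \<gamma> m" using hC by simp
  have sm: "m \<le> s" using s unfolding m_def .
  have Cs: "Cc N L \<gamma> s"
  proof (cases "s = m")
    case True then show ?thesis using Cm by simp
  next
    case False then show ?thesis using gt sm by simp
  qed
  have "s > 0"
  proof (rule ccontr)
    assume "\<not> s > 0"
    then have "s = 0" using sm m0 by simp
    moreover have "0 < L * (\<gamma> * (1 - \<gamma>))" using L \<gamma> by (intro mult_pos_pos) auto
    ultimately show False using Cs unfolding Cc_def by simp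
  qed
  then show ?thesis using Cs unfolding N_def L_def by simp
qed

lemma exponent_bound:
  fixes N L \<gamma> s V :: real
  assumes N: "N > 0" and L: "L > 0" and \<gamma>: "0 < \<gamma>" "\<gamma> < 1" and s: "s > 0"
    and C: "Cc N L \<gamma> s" and V: "0 \<le> V" "V \<le> N * (\<gamma> * (1 - \<gamma>) + s)"
  defines "l \<equiv> N * s / (N * (\<gamma> * (1 - \<gamma>) + s) + N * s / 3)"
  shows "0 < l \<and> l < 3 \<and> - l * (N * s) + l\<^sup>2 / (2 * (1 - l / 3)) * V \<le> - L"
proof -
  define v where "v = \<gamma> * (1 - \<gamma>) + s"
  define W where "W = N * v + N * s / 3"
  have v: "v > 0" unfolding v_def using \<gamma> s by (simp add: add_pos_pos)
  have W: "W > 0" unfolding W_def using N v s by (simp add: add_pos_pos)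
  have ldef: "l = N * s / W" unfolding l_def W_def v_def by simp
  have l0: "0 < l" unfolding ldef using N s W by simp
  have l3: "l < 3" unfolding ldef using W N v s by (simp add: W_def field_simps)
  have om: "1 - l / 3 = N * v / W" unfolding ldef using W by (simp add: W_def field_simps)
  have psi0: "0 \<le> l\<^sup>2 / (2 * (1 - l / 3))" using l3 by simp
  have "l\<^sup>2 / (2 * (1 - l / 3)) * V \<le> l\<^sup>2 / (2 * (1 - l / 3)) * (N * v)"
    using V psi0 unfolding v_def by (intro mult_left_mono) auto
  also have "\<dots> = l * (N * s) / 2"
    unfolding om using N v W by (simp add: ldef field_simps power2_eq_square)
  finally have "- l * (N * s) + l\<^sup>2 / (2 * (1 - l / 3)) * V \<le> - (l * (N * s) / 2)" by linarith
  also have "l * (N * s) / 2 = (N * s)\<^sup>2 / (2 * W)" unfolding ldef using W by (simp add: power2_eq_square)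
  also have "L \<le> (N * s)\<^sup>2 / (2 * W)"
  proof -
    have "2 * W * L = N * (2 * L * v + 2/3 * L * s)" unfolding W_def by (simp add: algebra_simps)
    also have "\<dots> \<le> N * (N * s\<^sup>2)" using C N unfolding Cc_def v_def by (intro mult_left_mono) auto
    also have "\<dots> = (N * s)\<^sup>2" by (simp add: power2_eq_square)
    finally show ?thesis using W by (simp add: field_simps mult.commute)
  qed
  then have "- ((N * s)\<^sup>2 / (2 * W)) \<le> - L" by simp
  finally show ?thesis using l0 l3 by simp
qed

lemma (in prob_space) mgf_indicator:
  assumes X[measurable]: "X \<in> borel_measurable M" and B[measurable]: "B \<in> sets borel"
    and p: "p = prob {\<omega> \<in> space M. X \<omega> \<in> B}"
  shows "(\<integral>\<^sup>+\<omega>. ennreal (exp (l * (\<sigma> * (indicator B (X \<omega>) - p)))) \<partial>M)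
          = ennreal ((1 - p) * exp (l * (\<sigma> * (0 - p))) + p * exp (l * (\<sigma> * (1 - p))))"
proof -
  define A where "A = {\<omega> \<in> space M. X \<omega> \<in> B}"
  have A[measurable]: "A \<in> sets M" unfolding A_def by measurable
  define e0 where "e0 = exp (l * (\<sigma> * (0 - p)))"
  define e1 where "e1 = exp (l * (\<sigma> * (1 - p)))"
  have p01: "0 \<le> p" "p \<le> 1" using p by auto
  have "(\<integral>\<^sup>+\<omega>. ennreal (exp (l * (\<sigma> * (indicator B (X \<omega>) - p)))) \<partial>M)
      = (\<integral>\<^sup>+\<omega>. ennreal e0 * indicator (space M - A) \<omega> + ennreal e1 * indicator A \<omega> \<partial>M)"
    by (intro nn_integral_cong) (auto simp: A_def e0_def e1_def indicator_def)
  also have "\<dots> = ennreal e0 * emeasure M (space M - A) + ennreal e1 * emeasure M A"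
    by (subst nn_integral_add) (auto simp: nn_integral_cmult_indicator)
  also have "emeasure M A = ennreal p" unfolding p A_def by (rule emeasure_eq_measure)
  also have "emeasure M (space M - A) = ennreal (1 - p)"
  proof -
    have "emeasure M (space M - A) = ennreal (measure M (space M - A))" by (rule emeasure_eq_measure)
    also have "measure M (space M - A) = 1 - p" using prob_compl[OF A] p by (simp add: A_def)
    finally show ?thesis .
  qed
  also have "ennreal e0 * ennreal (1 - p) + ennreal e1 * ennreal p = ennreal ((1 - p) * e0 + p * e1)"
  proof -
    have e: "0 \<le> e0" "0 \<le> e1" by (auto simp: e0_def e1_def)
    have "ennreal ((1 - p) * e0 + p * e1) = ennreal ((1 - p) * e0) + ennreal (p * e1)"
      by (rule ennreal_plus) (use p01 e in auto)
    also have "ennreal ((1 - p) * e0) = ennreal (1 - p) * ennreal e0"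
      by (rule ennreal_mult) (use p01 e in auto)
    also have "ennreal (p * e1) = ennreal p * ennreal e1"
      by (rule ennreal_mult) (use p01 e in auto)
    finally show ?thesis by (simp only: mult.commute)
  qed
  finally show ?thesis by (simp add: e0_def e1_def)
qed

lemma (in prob_space) bernstein_ind:
  fixes X :: "'i \<Rightarrow> 'a \<Rightarrow> real" and B :: "'i \<Rightarrow> real set" and p :: "'i \<Rightarrow> real"
  assumes fin: "finite I" and indep: "indep_vars (\<lambda>_. borel) X I"
    and B: "\<And>i. i \<in> I \<Longrightarrow> B i \<in> sets borel"
    and p: "\<And>i. i \<in> I \<Longrightarrow> p i = prob {\<omega> \<in> space M. X i \<omega> \<in> B i}"
    and \<sigma>: "\<sigma> = 1 \<or> \<sigma> = -1" and l: "0 < l" "l < 3"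
  shows "prob {\<omega> \<in> space M. \<sigma> * ((\<Sum>i\<in>I. indicator (B i) (X i \<omega>)) - (\<Sum>i\<in>I. p i)) \<ge> t}
         \<le> exp (- l * t + l\<^sup>2 / (2 * (1 - l / 3)) * (\<Sum>i\<in>I. p i * (1 - p i)))"
proof -
  have rv[measurable]: "X i \<in> borel_measurable M" if "i \<in> I" for i
    using indep that unfolding indep_vars_def by auto
  define \<psi> where "\<psi> = l\<^sup>2 / (2 * (1 - l / 3))"
  define Z where "Z = (\<lambda>i \<omega>. \<sigma> * (indicator (B i) (X i \<omega>) - p i))"
  have Ym: "(\<lambda>y. ennreal (exp (l * (\<sigma> * (indicator (B i) y - p i))))) \<in> borel_measurable borel"
    and Zim: "Z i \<in> borel_measurable M" if i: "i \<in> I" for i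
  proof -
    have [measurable]: "B i \<in> sets borel" using B i .
    have [measurable]: "X i \<in> borel_measurable M" using rv i .
    show "(\<lambda>y. ennreal (exp (l * (\<sigma> * (indicator (B i) y - p i))))) \<in> borel_measurable borel"
      by measurable
    show "Z i \<in> borel_measurable M" unfolding Z_def by measurable
  qed
  have Zm: "(\<lambda>\<omega>. \<Sum>i\<in>I. Z i \<omega>) \<in> borel_measurable M"
    using Zim by (intro borel_measurable_sum) auto
  have seteq: "{\<omega> \<in> space M. \<sigma> * ((\<Sum>i\<in>I. indicator (B i) (X i \<omega>)) - (\<Sum>i\<in>I. p i)) \<ge> t}
      = {\<omega> \<in> space M. (\<Sum>i\<in>I. Z i \<omega>) \<ge> t}"
  proof -
    have "\<sigma> * ((\<Sum>i\<in>I. indicator (B i) (X i \<omega>)) - (\<Sum>i\<in>I. p i)) = (\<Sum>i\<in>I. Z i \<omega>)" for \<omega>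
      by (simp only: Z_def sum_subtractf[symmetric] sum_distrib_left)
    then show ?thesis by simp
  qed
  have "ennreal (prob {\<omega> \<in> space M. (\<Sum>i\<in>I. Z i \<omega>) \<ge> t}) = emeasure M {\<omega> \<in> space M. (\<Sum>i\<in>I. Z i \<omega>) \<ge> t}"
    by (rule emeasure_eq_measure[symmetric])
  also have "\<dots> \<le> ennreal (exp (-l * t)) * (\<integral>\<^sup>+\<omega>\<in>space M. exp (l * (\<Sum>i\<in>I. Z i \<omega>)) \<partial>M)"
  proof (rule Chernoff_ineq_nn_integral_ge[OF l(1)])
    show "(\<lambda>x. (\<Sum>i\<in>I. Z i x) * indicator (space M) x) \<in> borel_measurable M"
      using Zm by (intro borel_measurable_times borel_measurable_indicator) auto
  qed simp
  also have "(\<integral>\<^sup>+\<omega>\<in>space M. exp (l * (\<Sum>i\<in>I. Z i \<omega>)) \<partial>M)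
      = (\<integral>\<^sup>+\<omega>. (\<Prod>i\<in>I. ennreal (exp (l * Z i \<omega>))) \<partial>M)"
    by (intro nn_integral_cong)
       (simp_all add: sum_distrib_left exp_sum fin prod_ennreal)
  also have "\<dots> = (\<Prod>i\<in>I. \<integral>\<^sup>+\<omega>. ennreal (exp (l * Z i \<omega>)) \<partial>M)"
    unfolding Z_def
    by (intro indep_vars_nn_integral fin indep_vars_compose2[OF indep] Ym) auto
  also have "ennreal (exp (-l * t)) * \<dots> \<le> ennreal (exp (-l * t)) * (\<Prod>i\<in>I. ennreal (exp (\<psi> * (p i * (1 - p i)))))"
  proof (intro mult_left_mono prod_mono_ennreal)
    fix i assume i: "i \<in> I"
    have pi: "0 \<le> p i" "p i \<le> 1" using p[OF i] by auto
    have "(\<integral>\<^sup>+\<omega>. ennreal (exp (l * Z i \<omega>)) \<partial>M)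
        = ennreal ((1 - p i) * exp (l * (\<sigma> * (0 - p i))) + p i * exp (l * (\<sigma> * (1 - p i))))"
      unfolding Z_def by (rule mgf_indicator) (use i B p rv in auto)
    also have "\<dots> \<le> ennreal (exp (\<psi> * (p i * (1 - p i))))"
      unfolding \<psi>_def using mgf_bound[OF pi \<sigma>, of l] l by (intro ennreal_leI) auto
    finally show "(\<integral>\<^sup>+\<omega>. ennreal (exp (l * Z i \<omega>)) \<partial>M) \<le> ennreal (exp (\<psi> * (p i * (1 - p i))))" .
  qed auto
  also have "\<dots> = ennreal (exp (-l * t) * (\<Prod>i\<in>I. exp (\<psi> * (p i * (1 - p i)))))"
    by (simp add: prod_ennreal prod_nonneg flip: ennreal_mult)
  also have "exp (-l * t) * (\<Prod>i\<in>I. exp (\<psi> * (p i * (1 - p i)))) = exp (- l * t + \<psi> * (\<Sum>i\<in>I. p i * (1 - p i)))"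
  proof -
    have "exp (- l * t + \<psi> * (\<Sum>i\<in>I. p i * (1 - p i))) = exp (-l * t) * exp (\<Sum>i\<in>I. \<psi> * (p i * (1 - p i)))"
      by (simp only: exp_add sum_distrib_left)
    also have "exp (\<Sum>i\<in>I. \<psi> * (p i * (1 - p i))) = (\<Prod>i\<in>I. exp (\<psi> * (p i * (1 - p i))))"
      by (rule exp_sum[OF fin])
    finally show ?thesis by simp
  qed
  finally show ?thesis unfolding seteq \<psi>_def
    by (subst (asm) ennreal_le_iff) simp_all
qed

lemma ecdf_mono:
  assumes "y \<le> z" shows "ecdf n x y \<le> ecdf n x z"
  unfolding ecdf_def
  by (intro divide_right_mono of_nat_mono card_mono) (use assms in auto)

lemma inf_attained:
  fixes x :: "nat \<Rightarrow> real" and P :: "nat \<Rightarrow> bool"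
  assumes n: "n \<ge> 1" and P0: "\<And>k. P k \<Longrightarrow> k > 0" and Pn: "P n"
  defines "S \<equiv> {y. P (card {i\<in>{1..n}. x i \<le> y})}"
  shows "Inf S \<in> S \<and> (\<forall>y\<in>S. Inf S \<le> y)"
proof -
  define V where "V = x ` {1..n}"
  have finV: "finite V" "V \<noteq> {}" using n by (auto simp: V_def)
  have MS: "Max V \<in> S"
  proof -
    have "{i\<in>{1..n}. x i \<le> Max V} = {1..n}" using finV by (auto simp: V_def)
    then show ?thesis using Pn by (simp add: S_def)
  qed
  define T where "T = S \<inter> V"
  have MV: "Max V \<in> V" using finV by (intro Max_in) auto
  have finT: "finite T" "T \<noteq> {}" using finV(1) MS MV unfolding T_def by blast+
  define a where "a = Min T"
  have aT: "a \<in> T" unfolding a_def using finT by (rule Min_in)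
  have low: "a \<le> y" if y: "y \<in> S" for y
  proof -
    define K where "K = {i\<in>{1..n}. x i \<le> y}"
    have PK: "P (card K)" using y by (simp add: S_def K_def)
    have finK: "finite K" by (simp add: K_def)
    have "card K > 0" using P0[OF PK] .
    then have Kne: "K \<noteq> {}" by auto
    define y' where "y' = Max (x ` K)"
    have y'y: "y' \<le> y" unfolding y'_def using finK Kne by (auto simp: K_def)
    have Keq: "{i\<in>{1..n}. x i \<le> y'} = K"
    proof
      show "K \<subseteq> {i\<in>{1..n}. x i \<le> y'}" unfolding y'_def using finK by (auto simp: K_def)
      show "{i\<in>{1..n}. x i \<le> y'} \<subseteq> K" using y'y by (auto simp: K_def)
    qed
    have "y' \<in> S" using PK Keq by (simp add: S_def)
    moreover have "y' \<in> V"
    proof -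
      have "y' \<in> x ` K" unfolding y'_def using finK Kne by (intro Max_in) auto
      then show ?thesis by (auto simp: V_def K_def)
    qed
    ultimately have "y' \<in> T" by (simp add: T_def)
    then have "a \<le> y'" unfolding a_def using finT by simp
    then show ?thesis using y'y by simp
  qed
  have "Inf S = a"
    by (rule cInf_eq_minimum) (use aT low in \<open>auto simp: T_def\<close>)
  then show ?thesis using aT low by (auto simp: T_def)
qed

lemma Qplus_le_iff:
  fixes x :: "nat \<Rightarrow> real"
  assumes n: "n \<ge> 1" and \<gamma>: "0 < \<gamma>" "\<gamma> < 1"
  shows "Qplus \<gamma> (ecdf n x) \<le> q \<longleftrightarrow> ecdf n x q > \<gamma>"
proof -
  define P where "P = (\<lambda>k::nat. real k / real n > \<gamma>)"
  have S: "{y. ecdf n x y > \<gamma>} = {y. P (card {i\<in>{1..n}. x i \<le> y})}"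
    by (simp add: P_def ecdf_def)
  have "Inf {y. P (card {i\<in>{1..n}. x i \<le> y})} \<in> {y. P (card {i\<in>{1..n}. x i \<le> y})} \<and>
        (\<forall>y\<in>{y. P (card {i\<in>{1..n}. x i \<le> y})}. Inf {y. P (card {i\<in>{1..n}. x i \<le> y})} \<le> y)"
    by (rule inf_attained) (use n \<gamma> in \<open>auto simp: P_def intro: Nat.gr0I\<close>)
  then have A: "ecdf n x (Qplus \<gamma> (ecdf n x)) > \<gamma>" and B: "\<And>y. ecdf n x y > \<gamma> \<Longrightarrow> Qplus \<gamma> (ecdf n x) \<le> y"
    unfolding Qplus_def S[symmetric] by auto
  show ?thesis
  proof
    assume "Qplus \<gamma> (ecdf n x) \<le> q"
    then show "ecdf n x q > \<gamma>" using A ecdf_mono[of "Qplus \<gamma> (ecdf n x)" q n x] by linarith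
  qed (rule B)
qed

lemma Qminus_less_iff:
  fixes x :: "nat \<Rightarrow> real"
  assumes n: "n \<ge> 1" and \<gamma>: "0 < \<gamma>" "\<gamma> < 1"
  shows "Qminus \<gamma> (ecdf n x) < q \<longleftrightarrow> real (card {i\<in>{1..n}. x i < q}) \<ge> \<gamma> * real n"
proof -
  define P where "P = (\<lambda>k::nat. real k / real n \<ge> \<gamma>)"
  have S: "{y. ecdf n x y \<ge> \<gamma>} = {y. P (card {i\<in>{1..n}. x i \<le> y})}"
    by (simp add: P_def ecdf_def)
  have "Inf {y. P (card {i\<in>{1..n}. x i \<le> y})} \<in> {y. P (card {i\<in>{1..n}. x i \<le> y})} \<and>
        (\<forall>y\<in>{y. P (card {i\<in>{1..n}. x i \<le> y})}. Inf {y. P (card {i\<in>{1..n}. x i \<le> y})} \<le> y)"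
    by (rule inf_attained) (use n \<gamma> in \<open>auto simp: P_def intro: Nat.gr0I\<close>)
  then have A: "ecdf n x (Qminus \<gamma> (ecdf n x)) \<ge> \<gamma>" and B: "\<And>y. ecdf n x y \<ge> \<gamma> \<Longrightarrow> Qminus \<gamma> (ecdf n x) \<le> y"
    unfolding Qminus_def S[symmetric] by auto
  have nn: "real n > 0" using n by simp
  show ?thesis
  proof
    assume lt: "Qminus \<gamma> (ecdf n x) < q"
    have "card {i\<in>{1..n}. x i \<le> Qminus \<gamma> (ecdf n x)} \<le> card {i\<in>{1..n}. x i < q}"
      by (rule card_mono) (use lt in auto)
    then have "ecdf n x (Qminus \<gamma> (ecdf n x)) \<le> real (card {i\<in>{1..n}. x i < q}) / real n"
      unfolding ecdf_def by (intro divide_right_mono) auto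
    then have "ecdf n x (Qminus \<gamma> (ecdf n x)) * real n \<le> real (card {i\<in>{1..n}. x i < q})"
      using nn by (simp add: field_simps)
    moreover have "\<gamma> * real n \<le> ecdf n x (Qminus \<gamma> (ecdf n x)) * real n"
      using A nn by (intro mult_right_mono) auto
    ultimately show "real (card {i\<in>{1..n}. x i < q}) \<ge> \<gamma> * real n" by linarith
  next
    assume c: "real (card {i\<in>{1..n}. x i < q}) \<ge> \<gamma> * real n"
    define K where "K = {i\<in>{1..n}. x i < q}"
    have finK: "finite K" by (simp add: K_def)
    have "real (card K) > 0" using c \<gamma> nn unfolding K_def[symmetric]
      by (smt (verit) mult_pos_pos)
    then have Kne: "K \<noteq> {}" by auto
    define y' where "y' = Max (x ` K)"
    have y'K: "y' \<in> x ` K" unfolding y'_def using finK Kne by (intro Max_in) auto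
    then have y'q: "y' < q" by (auto simp: K_def)
    have "card K \<le> card {i\<in>{1..n}. x i \<le> y'}"
      by (rule card_mono) (use finK in \<open>auto simp: K_def y'_def\<close>)
    then have "real (card K) / real n \<le> ecdf n x y'"
      unfolding ecdf_def by (intro divide_right_mono) auto
    moreover have "\<gamma> \<le> real (card K) / real n" using c nn unfolding K_def[symmetric] by (simp add: field_simps)
    ultimately have "Qminus \<gamma> (ecdf n x) \<le> y'" by (intro B) simp
    then show "Qminus \<gamma> (ecdf n x) < q" using y'q by simp
  qed
qed

lemma card_indicator_sum:
  fixes x :: "nat \<Rightarrow> real"
  assumes "finite I"
  shows "real (card {i\<in>I. x i \<in> A}) = (\<Sum>i\<in>I. indicator A (x i))"
proof -
  have "real (card {i\<in>I. x i \<in> A}) = (\<Sum>i\<in>{i\<in>I. x i \<in> A}. 1)" by simp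
  also have "\<dots> = (\<Sum>i\<in>I. if x i \<in> A then 1 else 0)" using assms by (rule sum.inter_filter)
  also have "\<dots> = (\<Sum>i\<in>I. indicator A (x i))" by (intro sum.cong) (auto simp: indicator_def)
  finally show ?thesis .
qed

lemma var_bound:
  fixes p :: "nat \<Rightarrow> real"
  assumes fin: "finite I" and ne: "I \<noteq> {}"
  defines "N \<equiv> real (card I)"
  shows "(\<Sum>i\<in>I. p i * (1 - p i)) \<le> N * (((\<Sum>i\<in>I. p i) / N) * (1 - (\<Sum>i\<in>I. p i) / N))"
proof -
  have N: "N > 0" unfolding N_def using fin ne by (simp add: card_gt_0_iff)
  define S where "S = (\<Sum>i\<in>I. p i)"
  define a where "a = S / N"
  have "0 \<le> (\<Sum>i\<in>I. (p i - a)\<^sup>2)" by (intro sum_nonneg) auto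
  also have "(\<Sum>i\<in>I. (p i - a)\<^sup>2) = (\<Sum>i\<in>I. (p i)\<^sup>2) - 2 * a * S + N * a\<^sup>2"
  proof -
    have "(\<Sum>i\<in>I. (p i - a)\<^sup>2) = (\<Sum>i\<in>I. (p i)\<^sup>2 - (2 * a) * p i + a\<^sup>2)"
      by (intro sum.cong) (auto simp: power2_diff)
    also have "\<dots> = (\<Sum>i\<in>I. (p i)\<^sup>2) - (2 * a) * (\<Sum>i\<in>I. p i) + of_nat (card I) * a\<^sup>2"
      by (simp only: sum.distrib sum_subtractf sum_distrib_left[symmetric] sum_constant)
    finally show ?thesis by (simp add: S_def N_def)
  qed
  finally have sq: "N * a\<^sup>2 \<le> (\<Sum>i\<in>I. (p i)\<^sup>2) + 2 * a * S - 2 * N * a\<^sup>2" 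
    using N by (simp add: a_def power2_eq_square field_simps)
  have "(\<Sum>i\<in>I. p i * (1 - p i)) = S - (\<Sum>i\<in>I. (p i)\<^sup>2)"
    by (simp add: S_def algebra_simps power2_eq_square sum_subtractf)
  moreover have "N * (a * (1 - a)) = S - N * a\<^sup>2"
    using N by (simp add: a_def power2_eq_square field_simps)
  moreover have "2 * a * S - 2 * N * a\<^sup>2 = 0" using N by (simp add: a_def power2_eq_square field_simps)
  ultimately show ?thesis using sq unfolding a_def S_def by linarith
qed

lemma pbar_bound:
  fixes \<gamma> s \<sigma> :: real
  assumes "\<sigma> = 1 \<or> \<sigma> = -1" "0 < \<gamma>" "\<gamma> < 1" "0 \<le> s"
  shows "(\<gamma> - \<sigma> * s) * (1 - (\<gamma> - \<sigma> * s)) \<le> \<gamma> * (1 - \<gamma>) + s"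
proof -
  have "(\<gamma> - \<sigma> * s) * (1 - (\<gamma> - \<sigma> * s)) = \<gamma> * (1 - \<gamma>) + \<sigma> * s * (2 * \<gamma> - 1) - s\<^sup>2"
    using assms(1) by (auto simp: algebra_simps power2_eq_square)
  moreover have "\<sigma> * s * (2 * \<gamma> - 1) \<le> s"
  proof (cases "\<sigma> = 1")
    case True
    have "s * (2 * \<gamma> - 1) \<le> s * 1" using assms by (intro mult_left_mono) auto
    then show ?thesis using True by simp
  next
    case False
    then have "\<sigma> = -1" using assms(1) by simp
    moreover have "s * (1 - 2 * \<gamma>) \<le> s * 1" using assms by (intro mult_left_mono) auto
    ultimately show ?thesis by (simp add: algebra_simps)
  qed
  moreover have "0 \<le> s\<^sup>2" by simp
  ultimately show ?thesis by linarith
qed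

lemma (in prob_space) tail:
  fixes X :: "nat \<Rightarrow> 'a \<Rightarrow> real" and Bs :: "nat \<Rightarrow> real set" and p :: "nat \<Rightarrow> real"
  assumes n: "n \<ge> 1" and indep: "indep_vars (\<lambda>_. borel) X {1..n}"
    and Bs: "\<And>i. i \<in> {1..n} \<Longrightarrow> Bs i \<in> sets borel"
    and p: "\<And>i. i \<in> {1..n} \<Longrightarrow> p i = prob {\<omega> \<in> space M. X i \<omega> \<in> Bs i}"
    and \<sigma>: "\<sigma> = 1 \<or> \<sigma> = -1" and \<gamma>: "0 < \<gamma>" "\<gamma> < 1" and \<delta>: "0 < \<delta>" "\<delta> < 1"
    and sm: "(INF \<epsilon>\<in>{0<..<1}. R n \<epsilon> \<gamma> \<delta> / (1 - \<epsilon>)) \<le> s"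
    and sdef: "s = \<sigma> * (\<gamma> - (\<Sum>i\<in>{1..n}. p i) / real n)"
  shows "prob {\<omega> \<in> space M. \<sigma> * ((\<Sum>i\<in>{1..n}. indicator (Bs i) (X i \<omega>)) - (\<Sum>i\<in>{1..n}. p i)) \<ge> real n * s} \<le> \<delta>"
proof -
  define N where "N = real n"
  define L where "L = ln (1 / \<delta>)"
  have N: "N > 0" using n by (simp add: N_def)
  have L: "L > 0" using \<delta> by (simp add: L_def)
  have Cs: "Cc N L \<gamma> s" and s0: "s > 0" using C_of_m[OF n \<gamma> \<delta> sm] by (auto simp: N_def L_def)
  define V where "V = (\<Sum>i\<in>{1..n}. p i * (1 - p i))"
  have p01: "0 \<le> p i \<and> p i \<le> 1" if "i \<in> {1..n}" for i using p[OF that] by simp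
  have V0: "0 \<le> V" unfolding V_def using p01 by (intro sum_nonneg) auto
  define pb where "pb = (\<Sum>i\<in>{1..n}. p i) / N"
  have "V \<le> N * (pb * (1 - pb))"
    using var_bound[of "{1..n}" p] n unfolding V_def pb_def N_def by simp
  also have "pb = \<gamma> - \<sigma> * s" using \<sigma> unfolding sdef pb_def N_def by auto
  also have "(\<gamma> - \<sigma> * s) * (1 - (\<gamma> - \<sigma> * s)) \<le> \<gamma> * (1 - \<gamma>) + s"
    using pbar_bound[OF \<sigma> \<gamma>] s0 by simp
  finally have VB: "V \<le> N * (\<gamma> * (1 - \<gamma>) + s)" using N by (simp add: mult_left_mono)
  define l where "l = N * s / (N * (\<gamma> * (1 - \<gamma>) + s) + N * s / 3)"
  have lb: "0 < l \<and> l < 3 \<and> - l * (N * s) + l\<^sup>2 / (2 * (1 - l / 3)) * V \<le> - L"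
    unfolding l_def by (rule exponent_bound[OF N L \<gamma> s0 Cs V0 VB])
  have "prob {\<omega> \<in> space M. \<sigma> * ((\<Sum>i\<in>{1..n}. indicator (Bs i) (X i \<omega>)) - (\<Sum>i\<in>{1..n}. p i)) \<ge> N * s}
        \<le> exp (- l * (N * s) + l\<^sup>2 / (2 * (1 - l / 3)) * V)"
    unfolding V_def by (rule bernstein_ind[OF _ indep Bs p \<sigma>]) (use lb in auto)
  also have "\<dots> \<le> exp (- L)" using lb by simp
  also have "exp (- L) = \<delta>" using \<delta> by (simp add: L_def ln_div)
  finally show ?thesis by (simp add: N_def)
qed

theorem lemma4:
  fixes M :: "'a measure" and X :: "nat \<Rightarrow> 'a \<Rightarrow> real" and n :: nat
    and \<gamma> \<delta> :: real
  assumes "prob_space M"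
    and "n \<ge> 1"
    and "\<And>i. i \<in> {1..n} \<Longrightarrow> X i \<in> borel_measurable M"
    and "prob_space.indep_vars M (\<lambda>_. borel) X {1..n}"
    and "\<And>i. i \<in> {1..n} \<Longrightarrow> absolutely_continuous lborel (distr M borel (X i))"
    and "0 < \<gamma>" "\<gamma> < 1" "0 < \<delta>" "\<delta> < 1"
  shows
   "let F = (\<lambda>i. cdf (distr M borel (X i)));
        \<phi> = Max ((\<lambda>i. SUP t. \<bar>F i t - F n t\<bar>) ` {1..n});
        B = \<phi> + (INF \<epsilon>\<in>{0<..<1}. R n \<epsilon> \<gamma> \<delta> / (1 - \<epsilon>))
    in measure M {\<omega> \<in> space M. F n (Qplus \<gamma> (ecdf n (\<lambda>i. X i \<omega>))) - \<gamma> \<le> B} \<ge> 1 - \<delta>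
     \<and> measure M {\<omega> \<in> space M. \<gamma> - F n (Qminus \<gamma> (ecdf n (\<lambda>i. X i \<omega>))) \<le> B} \<ge> 1 - \<delta>"
proof -
  interpret prob_space M by (rule assms(1))
  have n: "n \<ge> 1" by (rule assms(2))
  have \<gamma>: "0 < \<gamma>" "\<gamma> < 1" and \<delta>: "0 < \<delta>" "\<delta> < 1" using assms(6-9) by auto
  have indep: "indep_vars (\<lambda>_. borel) X {1..n}" by (rule assms(4))
  have rv: "random_variable borel (X i)" if "i \<in> {1..n}" for i using assms(3) that by simp
  define I where "I = {1..n}"
  have finI: "finite I" by (simp add: I_def)
  have cardI: "card I = n" by (simp add: I_def)
  define F where "F = (\<lambda>i. cdf (distr M borel (X i)))"
  define \<phi> where "\<phi> = Max ((\<lambda>i. SUP t. \<bar>F i t - F n t\<bar>) ` {1..n})"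
  define m where "m = (INF \<epsilon>\<in>{0<..<1}. R n \<epsilon> \<gamma> \<delta> / (1 - \<epsilon>))"
  have nI: "n \<in> {1..n}" using n by simp
  have RD: "real_distribution (distr M borel (X i))" if "i \<in> {1..n}" for i using rv[OF that] by simp
  have F01: "0 \<le> F i t \<and> F i t \<le> 1" if "i \<in> {1..n}" for i t
    unfolding F_def cdf_def using real_distribution.cdf_bounded_prob[OF RD[OF that], of t]
    by (simp add: cdf_def)
  have Fmono: "F i x \<le> F i y" if "i \<in> {1..n}" "x \<le> y" for i x y
    unfolding F_def
    by (rule finite_borel_measure.cdf_nondecreasing[OF real_distribution.finite_borel_measure_M[OF RD[OF that(1)]] that(2)])
  have Fprob: "F i t = prob {\<omega> \<in> space M. X i \<omega> \<in> {..t}}" if "i \<in> {1..n}" for i t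
  proof -
    have "F i t = measure (distr M borel (X i)) {..t}" by (simp add: F_def cdf_def)
    also have "\<dots> = prob (X i -` {..t} \<inter> space M)" by (rule measure_distr[OF rv[OF that]]) simp
    also have "X i -` {..t} \<inter> space M = {\<omega> \<in> space M. X i \<omega> \<in> {..t}}" by auto
    finally show ?thesis .
  qed
  have Fcont: "isCont (F n) t" for t
  proof -
    have "emeasure (distr M borel (X n)) {t} = 0"
      by (rule absolutely_continuousD[OF assms(5)[OF nI]]) auto
    then have "measure (distr M borel (X n)) {t} = 0" by (simp add: measure_def)
    then show ?thesis unfolding F_def
      using finite_borel_measure.isCont_cdf[OF real_distribution.finite_borel_measure_M[OF RD[OF nI]]] by simp
  qed
  have Fbot: "(F n \<longlongrightarrow> 0) at_bot" unfolding F_def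
    by (rule finite_borel_measure.cdf_lim_at_bot[OF real_distribution.finite_borel_measure_M[OF RD[OF nI]]])
  have Ftop: "(F n \<longlongrightarrow> 1) at_top" unfolding F_def
    by (rule real_distribution.cdf_lim_at_top_prob[OF RD[OF nI]])
  have Fleft: "(F n \<longlongrightarrow> F n t) (at_left t)" and Fright: "(F n \<longlongrightarrow> F n t) (at_right t)" for t
    using Fcont[of t] unfolding isCont_def filterlim_at_split by auto
  have \<phi>b: "\<bar>F i t - F n t\<bar> \<le> \<phi>" if i: "i \<in> {1..n}" for i t
  proof -
    have "\<bar>F i t - F n t\<bar> \<le> (SUP t. \<bar>F i t - F n t\<bar>)"
    proof (rule cSUP_upper)
      show "bdd_above (range (\<lambda>t. \<bar>F i t - F n t\<bar>))"
      proof (rule bdd_aboveI2)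
        fix t show "\<bar>F i t - F n t\<bar> \<le> 1" using F01[OF i, of t] F01[OF nI, of t] by linarith
      qed
    qed simp
    also have "\<dots> \<le> \<phi>" unfolding \<phi>_def using i by (intro Max_ge) auto
    finally show ?thesis .
  qed
  have \<phi>0: "0 \<le> \<phi>" using \<phi>b[OF nI, of 0] by simp
  have m0: "0 \<le> m"
  proof -
    have "0 \<le> R n \<epsilon> \<gamma> \<delta> / (1 - \<epsilon>)" if "\<epsilon> \<in> {0<..<1}" for \<epsilon>
      using that \<gamma> \<delta> n unfolding R_def by (intro divide_nonneg_nonneg add_nonneg_nonneg) auto
    then show ?thesis unfolding m_def by (intro cINF_greatest) auto
  qed
  have summeas: "(\<lambda>\<omega>. \<Sum>i\<in>{1..n}. indicator A (X i \<omega>) :: real) \<in> borel_measurable M"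
    if A: "A \<in> sets borel" for A
  proof (rule borel_measurable_sum)
    fix i assume i: "i \<in> {1..n}"
    show "(\<lambda>\<omega>. indicator A (X i \<omega>) :: real) \<in> borel_measurable M"
      by (rule measurable_compose[OF rv[OF i] borel_measurable_indicator[OF A]])
  qed
  have cardsum: "real (card {i\<in>{1..n}. X i \<omega> \<in> A}) = (\<Sum>i\<in>{1..n}. indicator A (X i \<omega>))" for \<omega> A
    by (rule card_indicator_sum) simp
  have nn: "real n > 0" using n by simp

  have part1: "measure M {\<omega> \<in> space M. F n (Qplus \<gamma> (ecdf n (\<lambda>i. X i \<omega>))) - \<gamma> \<le> \<phi> + m} \<ge> 1 - \<delta>"
  proof (cases "\<gamma> + \<phi> + m \<ge> 1")
    case True
    have "F n t - \<gamma> \<le> \<phi> + m" for t using F01[OF nI, of t] True by linarith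
    then have "{\<omega> \<in> space M. F n (Qplus \<gamma> (ecdf n (\<lambda>i. X i \<omega>))) - \<gamma> \<le> \<phi> + m} = space M"
      by auto
    then show ?thesis using \<delta> by (simp add: prob_space)
  next
    case False
    define c where "c = \<gamma> + \<phi> + m"
    have c: "0 < c" "c < 1" using False \<gamma> \<phi>0 m0 by (auto simp: c_def)
    define D where "D = {x. F n x \<le> c}"
    have "eventually (\<lambda>x. F n x < c) at_bot" using order_tendstoD(2)[OF Fbot c(1)] .
    then obtain x0 where x0: "\<And>x. x \<le> x0 \<Longrightarrow> F n x < c" unfolding eventually_at_bot_linorder by auto
    have "eventually (\<lambda>x. c < F n x) at_top" using order_tendstoD(1)[OF Ftop c(2)] .
    then obtain x1 where x1: "\<And>x. x \<ge> x1 \<Longrightarrow> c < F n x" unfolding eventually_at_top_linorder by auto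
    have "x0 \<in> D" using x0[of x0] by (simp add: D_def)
    then have Dne: "D \<noteq> {}" by auto
    have Dbdd: "bdd_above D"
    proof (rule bdd_aboveI)
      fix x assume "x \<in> D" then show "x \<le> x1" using x1[of x] by (force simp: D_def)
    qed
    define q where "q = Sup D"
    have Fq_le: "F n q \<le> c"
    proof (rule tendsto_upperbound[OF Fleft])
      show "\<forall>\<^sub>F y in at_left q. F n y \<le> c"
        unfolding eventually_at_filter
      proof (intro always_eventually allI impI)
        fix y assume "y \<noteq> q" "y \<in> {..<q}"
        then have "y < Sup D" by (simp add: q_def)
        then obtain d where "d \<in> D" "y < d" using less_cSup_iff[OF Dne Dbdd] by auto
        then show "F n y \<le> c" using Fmono[OF nI, of y d] by (auto simp: D_def)
      qed
    qed (simp add: trivial_limit_at_left_real)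
    have Fq_ge: "c \<le> F n q"
    proof (rule tendsto_lowerbound[OF Fright])
      show "\<forall>\<^sub>F y in at_right q. c \<le> F n y"
        unfolding eventually_at_filter
      proof (intro always_eventually allI impI)
        fix y assume "y \<noteq> q" "y \<in> {q<..}"
        then have "\<not> y \<le> Sup D" by (simp add: q_def)
        then have "y \<notin> D" using cSup_upper[OF _ Dbdd] by blast
        then show "c \<le> F n y" by (simp add: D_def)
      qed
    qed simp
    define p where "p = (\<lambda>i. F i q)"
    define Bs where "Bs = (\<lambda>i::nat. {..q})"
    define s where "s = (- 1) * (\<gamma> - (\<Sum>i\<in>{1..n}. p i) / real n)"
    define good where "good = {\<omega> \<in> space M. \<gamma> * real n < (\<Sum>i\<in>{1..n}. indicator {..q} (X i \<omega>))}"
    have geq: "{\<omega> \<in> space M. F n (Qplus \<gamma> (ecdf n (\<lambda>i. X i \<omega>))) - \<gamma> \<le> \<phi> + m} = good"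
    proof -
      have "F n (Qplus \<gamma> (ecdf n (\<lambda>i. X i \<omega>))) - \<gamma> \<le> \<phi> + m \<longleftrightarrow>
            \<gamma> * real n < (\<Sum>i\<in>{1..n}. indicator {..q} (X i \<omega>))" for \<omega>
      proof -
        let ?Q = "Qplus \<gamma> (ecdf n (\<lambda>i. X i \<omega>))"
        have "F n ?Q - \<gamma> \<le> \<phi> + m \<longleftrightarrow> ?Q \<le> q"
        proof
          assume "F n ?Q - \<gamma> \<le> \<phi> + m" then have "?Q \<in> D" by (simp add: D_def c_def)
          then show "?Q \<le> q" unfolding q_def by (rule cSup_upper[OF _ Dbdd])
        next
          assume "?Q \<le> q" then have "F n ?Q \<le> F n q" by (rule Fmono[OF nI])
          then show "F n ?Q - \<gamma> \<le> \<phi> + m" using Fq_le by (simp add: c_def)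
        qed
        also have "\<dots> \<longleftrightarrow> ecdf n (\<lambda>i. X i \<omega>) q > \<gamma>" by (rule Qplus_le_iff[OF n \<gamma>])
        also have "ecdf n (\<lambda>i. X i \<omega>) q = (\<Sum>i\<in>{1..n}. indicator {..q} (X i \<omega>)) / real n"
          unfolding ecdf_def using cardsum[of \<omega> "{..q}"] by simp
        also have "\<gamma> < (\<Sum>i\<in>{1..n}. indicator {..q} (X i \<omega>)) / real n \<longleftrightarrow>
                   \<gamma> * real n < (\<Sum>i\<in>{1..n}. indicator {..q} (X i \<omega>))"
          using nn by (simp add: field_simps)
        finally show ?thesis .
      qed
      then show ?thesis unfolding good_def by auto
    qed
    have [measurable]: "(\<lambda>\<omega>. \<Sum>i\<in>{1..n}. indicator {..q} (X i \<omega>) :: real) \<in> borel_measurable M"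
      using summeas[of "{..q}"] by simp
    have gm: "good \<in> sets M" unfolding good_def by measurable
    have bad: "space M - good = {\<omega> \<in> space M. (- 1) * ((\<Sum>i\<in>{1..n}. indicator (Bs i) (X i \<omega>)) - (\<Sum>i\<in>{1..n}. p i)) \<ge> real n * s}"
    proof -
      have "(\<not> \<gamma> * real n < S) \<longleftrightarrow> (- 1) * (S - (\<Sum>i\<in>{1..n}. p i)) \<ge> real n * s" for S :: real
        using nn unfolding s_def by (simp add: field_simps not_less)
      then show ?thesis unfolding good_def Bs_def by auto
    qed
    have sm: "m \<le> s"
    proof -
      have "(\<Sum>i\<in>{1..n}. \<gamma> + m) \<le> (\<Sum>i\<in>{1..n}. p i)"
      proof (rule sum_mono)
        fix i assume i: "i \<in> {1..n}"
        show "\<gamma> + m \<le> p i" using \<phi>b[OF i, of q] Fq_ge unfolding p_def c_def by linarith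
      qed
      then have "real n * (\<gamma> + m) \<le> (\<Sum>i\<in>{1..n}. p i)" by simp
      then show ?thesis unfolding s_def using nn by (simp add: field_simps)
    qed
    have pb: "prob (space M - good) \<le> \<delta>"
      unfolding bad
    proof (rule tail[OF n indep])
      show "\<And>i. i \<in> {1..n} \<Longrightarrow> Bs i \<in> sets borel" by (simp add: Bs_def)
      show "\<And>i. i \<in> {1..n} \<Longrightarrow> p i = prob {\<omega> \<in> space M. X i \<omega> \<in> Bs i}"
        unfolding p_def Bs_def by (rule Fprob)
      show "(INF \<epsilon>\<in>{0<..<1}. R n \<epsilon> \<gamma> \<delta> / (1 - \<epsilon>)) \<le> s" using sm by (simp add: m_def)
    qed (use \<gamma> \<delta> s_def in auto)
    have "prob good = 1 - prob (space M - good)" using prob_compl[OF gm] by simp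
    then show ?thesis using geq pb by simp
  qed

  have part2: "measure M {\<omega> \<in> space M. \<gamma> - F n (Qminus \<gamma> (ecdf n (\<lambda>i. X i \<omega>))) \<le> \<phi> + m} \<ge> 1 - \<delta>"
  proof (cases "\<gamma> - \<phi> - m \<le> 0")
    case True
    have "\<gamma> - F n t \<le> \<phi> + m" for t using F01[OF nI, of t] True by linarith
    then have "{\<omega> \<in> space M. \<gamma> - F n (Qminus \<gamma> (ecdf n (\<lambda>i. X i \<omega>))) \<le> \<phi> + m} = space M"
      by auto
    then show ?thesis using \<delta> by (simp add: prob_space)
  next
    case False
    define c where "c = \<gamma> - \<phi> - m"
    have c: "0 < c" "c < 1" using False \<gamma> \<phi>0 m0 by (auto simp: c_def)
    define D where "D = {x. c \<le> F n x}"
    have "eventually (\<lambda>x. F n x < c) at_bot" using order_tendstoD(2)[OF Fbot c(1)] .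
    then obtain x0 where x0: "\<And>x. x \<le> x0 \<Longrightarrow> F n x < c" unfolding eventually_at_bot_linorder by auto
    have "eventually (\<lambda>x. c < F n x) at_top" using order_tendstoD(1)[OF Ftop c(2)] .
    then obtain x1 where x1: "\<And>x. x \<ge> x1 \<Longrightarrow> c < F n x" unfolding eventually_at_top_linorder by auto
    have "x1 \<in> D" using x1[of x1] by (simp add: D_def)
    then have Dne: "D \<noteq> {}" by auto
    have Dbdd: "bdd_below D"
    proof (rule bdd_belowI)
      fix x assume "x \<in> D" then show "x0 \<le> x" using x0[of x] by (force simp: D_def)
    qed
    define q where "q = Inf D"
    have Fq_ge: "c \<le> F n q"
    proof (rule tendsto_lowerbound[OF Fright])
      show "\<forall>\<^sub>F y in at_right q. c \<le> F n y"
        unfolding eventually_at_filter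
      proof (intro always_eventually allI impI)
        fix y assume "y \<noteq> q" "y \<in> {q<..}"
        then have "Inf D < y" by (simp add: q_def)
        then obtain d where "d \<in> D" "d < y" using cInf_less_iff[OF Dne Dbdd] by auto
        then show "c \<le> F n y" using Fmono[OF nI, of d y] by (auto simp: D_def)
      qed
    qed simp
    have Fq_le: "F n q \<le> c"
    proof (rule tendsto_upperbound[OF Fleft])
      show "\<forall>\<^sub>F y in at_left q. F n y \<le> c"
        unfolding eventually_at_filter
      proof (intro always_eventually allI impI)
        fix y assume "y \<noteq> q" "y \<in> {..<q}"
        then have "\<not> Inf D \<le> y" by (simp add: q_def)
        then have "y \<notin> D" using cInf_lower[OF _ Dbdd] by blast
        then show "F n y \<le> c" by (simp add: D_def)
      qed
    qed (simp add: trivial_limit_at_left_real)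
    define Bs where "Bs = (\<lambda>i::nat. {..<q})"
    define p where "p = (\<lambda>i. prob {\<omega> \<in> space M. X i \<omega> \<in> Bs i})"
    define s where "s = 1 * (\<gamma> - (\<Sum>i\<in>{1..n}. p i) / real n)"
    define good where "good = {\<omega> \<in> space M. (\<Sum>i\<in>{1..n}. indicator {..<q} (X i \<omega>)) < \<gamma> * real n}"
    have geq: "{\<omega> \<in> space M. \<gamma> - F n (Qminus \<gamma> (ecdf n (\<lambda>i. X i \<omega>))) \<le> \<phi> + m} = good"
    proof -
      have "\<gamma> - F n (Qminus \<gamma> (ecdf n (\<lambda>i. X i \<omega>))) \<le> \<phi> + m \<longleftrightarrow>
            (\<Sum>i\<in>{1..n}. indicator {..<q} (X i \<omega>)) < \<gamma> * real n" for \<omega>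
      proof -
        let ?Q = "Qminus \<gamma> (ecdf n (\<lambda>i. X i \<omega>))"
        have "\<gamma> - F n ?Q \<le> \<phi> + m \<longleftrightarrow> \<not> ?Q < q"
        proof
          assume "\<gamma> - F n ?Q \<le> \<phi> + m" then have "?Q \<in> D" by (simp add: D_def c_def)
          then have "q \<le> ?Q" unfolding q_def by (rule cInf_lower[OF _ Dbdd])
          then show "\<not> ?Q < q" by simp
        next
          assume "\<not> ?Q < q" then have "F n q \<le> F n ?Q" by (intro Fmono[OF nI]) simp
          then show "\<gamma> - F n ?Q \<le> \<phi> + m" using Fq_ge by (simp add: c_def)
        qed
        also have "?Q < q \<longleftrightarrow> real (card {i\<in>{1..n}. X i \<omega> < q}) \<ge> \<gamma> * real n"
          by (rule Qminus_less_iff[OF n \<gamma>])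
        also have "real (card {i\<in>{1..n}. X i \<omega> < q}) = (\<Sum>i\<in>{1..n}. indicator {..<q} (X i \<omega>))"
          using cardsum[of \<omega> "{..<q}"] by simp
        finally show ?thesis by (simp add: not_le)
      qed
      then show ?thesis unfolding good_def by auto
    qed
    have [measurable]: "(\<lambda>\<omega>. \<Sum>i\<in>{1..n}. indicator {..<q} (X i \<omega>) :: real) \<in> borel_measurable M"
      using summeas[of "{..<q}"] by simp
    have gm: "good \<in> sets M" unfolding good_def by measurable
    have bad: "space M - good = {\<omega> \<in> space M. 1 * ((\<Sum>i\<in>{1..n}. indicator (Bs i) (X i \<omega>)) - (\<Sum>i\<in>{1..n}. p i)) \<ge> real n * s}"
    proof -
      have "(\<not> S < \<gamma> * real n) \<longleftrightarrow> 1 * (S - (\<Sum>i\<in>{1..n}. p i)) \<ge> real n * s" for S :: real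
        using nn unfolding s_def by (simp add: field_simps not_less)
      then show ?thesis unfolding good_def Bs_def by auto
    qed
    have sm: "m \<le> s"
    proof -
      have "(\<Sum>i\<in>{1..n}. p i) \<le> (\<Sum>i\<in>{1..n}. \<gamma> - m)"
      proof (rule sum_mono)
        fix i assume i: "i \<in> {1..n}"
        have [measurable]: "X i \<in> borel_measurable M" using rv[OF i] .
        have "p i \<le> prob {\<omega> \<in> space M. X i \<omega> \<in> {..q}}"
          unfolding p_def Bs_def by (rule finite_measure_mono) (auto, measurable)
        also have "\<dots> = F i q" using Fprob[OF i] by simp
        finally show "p i \<le> \<gamma> - m" using \<phi>b[OF i, of q] Fq_le unfolding c_def by linarith
      qed
      then have "(\<Sum>i\<in>{1..n}. p i) \<le> real n * (\<gamma> - m)" by simp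
      then show ?thesis unfolding s_def using nn by (simp add: field_simps)
    qed
    have pb: "prob (space M - good) \<le> \<delta>"
      unfolding bad
    proof (rule tail[OF n indep])
      show "\<And>i. i \<in> {1..n} \<Longrightarrow> Bs i \<in> sets borel" by (simp add: Bs_def)
      show "\<And>i. i \<in> {1..n} \<Longrightarrow> p i = prob {\<omega> \<in> space M. X i \<omega> \<in> Bs i}"
        unfolding p_def by simp
      show "(INF \<epsilon>\<in>{0<..<1}. R n \<epsilon> \<gamma> \<delta> / (1 - \<epsilon>)) \<le> s" using sm by (simp add: m_def)
    qed (use \<gamma> \<delta> s_def in auto)
    have "prob good = 1 - prob (space M - good)" using prob_compl[OF gm] by simp
    then show ?thesis using geq pb by simp
  qed
  show ?thesis unfolding Let_def using part1 part2 unfolding F_def \<phi>_def m_def by blast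
qed

end
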